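(* Let $n \ge 2$ and let $Q(x) = x_1x_2 + x_3x_4 + \cdots + x_{2n-1}x_{2n}$ be the hyperbolic quadratic form on $V(2n,2)$, with associated symmetric bilinear form $B(x,y) = Q(x+y)-Q(x)-Q(y)$ and orthogonality $\perp$ with respect to $B$. Let $\Pi$ and $\Sigma$ be two totally singular $n$-dimensional subspaces with $\Pi \cap \Sigma = 0$. For a non-singular point $X = \langle x\rangle$ (i.e. $Q(x) \neq 0$), put $G = X^\perp \cap \Pi$, $H = X^\perp \cap \Sigma$, and let $P = G^\perp \cap \Sigma$; define $f(X) = (P,H)$. Then $P$ is a $1$-dimensional subspace of $\Sigma$, $H$ is an $(n-1)$-dimensional subspace of $\Sigma$, and $P \not\subseteq H$, i.e. $f(X)$ is a point-hyperplane antiflag of $\Sigma \cong V(n,2)$.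
   Context: Subspaces are taken in the vector-space sense: points are $1$-dimensional subspaces, hyperplanes of $\Sigma$ are its $(n-1)$-dimensional subspaces. A point $\langle x\rangle$ is singular if $Q(x)=0$; a subspace is totally singular if all its points are singular. A point-hyperplane antiflag of a vector space $V$ is a pair $(P,H)$ with $P$ a $1$-dimensional subspace, $H$ a hyperplane, and $P \not\subseteq H$. *)

theory Defs
  imports Complex_Main "HOL-Library.Z2" "HOL-Library.Function_Algebras"
begin

text \<open>Vectors of V(2n,2) are functions nat => bit
  vanishing at indices >= 2n (coordinates x_1..x_2n are stored at indices 0..2n-1);
  addition is pointwise (Function_Algebras), scalar multiplication is scaleV.\<close>

definition scaleV :: "bit \<Rightarrow> (nat \<Rightarrow> bit) \<Rightarrow> (nat \<Rightarrow> bit)" where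
  "scaleV c x = (\<lambda>i. c * x i)"

lemma vector_space_scaleV: "vector_space scaleV"
  by unfold_locales (auto simp: scaleV_def fun_eq_iff algebra_simps)

definition Vsp :: "nat \<Rightarrow> (nat \<Rightarrow> bit) set" where
  "Vsp m = {x. \<forall>i\<ge>m. x i = 0}"

abbreviation spanV :: "(nat \<Rightarrow> bit) set \<Rightarrow> (nat \<Rightarrow> bit) set" where
  "spanV \<equiv> module.span scaleV"

abbreviation dimV :: "(nat \<Rightarrow> bit) set \<Rightarrow> nat" where
  "dimV \<equiv> vector_space.dim scaleV"

definition is_subspace :: "nat \<Rightarrow> (nat \<Rightarrow> bit) set \<Rightarrow> bool" where
  "is_subspace n S \<longleftrightarrow> S \<subseteq> Vsp (2*n) \<and> module.subspace scaleV S"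

definition Qf :: "nat \<Rightarrow> (nat \<Rightarrow> bit) \<Rightarrow> bit" where
  "Qf n x = (\<Sum>i<n. x (2*i) * x (2*i+1))"

definition Bf :: "nat \<Rightarrow> (nat \<Rightarrow> bit) \<Rightarrow> (nat \<Rightarrow> bit) \<Rightarrow> bit" where
  "Bf n x y = Qf n (x + y) - Qf n x - Qf n y"

definition perp :: "nat \<Rightarrow> (nat \<Rightarrow> bit) set \<Rightarrow> (nat \<Rightarrow> bit) set" where
  "perp n S = {y \<in> Vsp (2*n). \<forall>x\<in>S. Bf n x y = 0}"

definition totally_singular :: "nat \<Rightarrow> (nat \<Rightarrow> bit) set \<Rightarrow> bool" where
  "totally_singular n S \<longleftrightarrow> is_subspace n S \<and> (\<forall>x\<in>S. Qf n x = 0)"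

end

theory Submission imports Defs begin
interpretation V: vector_space scaleV by (rule vector_space_scaleV)

lemma bit_cases2: "(b::bit) = 0 \<or> b = 1" by auto
lemma bit_neg[simp]: "- (b::bit) = b" by (cases b rule: bit_cases2[THEN disjE]) auto
lemma bit_minus[simp]: "(a::bit) - b = a + b" by (metis bit_neg diff_conv_add_uminus)
lemma fun_neg[simp]: "- (f::nat\<Rightarrow>bit) = f" by (auto simp: fun_eq_iff)
lemma fun_minus[simp]: "(f::nat\<Rightarrow>bit) - g = f + g" by (auto simp: fun_eq_iff)

lemma Bf_formula: "Bf n x y = (\<Sum>i<n. x(2*i)*y(2*i+1) + y(2*i)*x(2*i+1))"
proof -
  have "Bf n x y = (\<Sum>i<n. (x(2*i)+y(2*i))*(x(2*i+1)+y(2*i+1)) - x(2*i)*x(2*i+1) - y(2*i)*y(2*i+1))"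
    unfolding Bf_def Qf_def by (simp only: plus_fun_apply sum_subtractf)
  also have "\<dots> = (\<Sum>i<n. x(2*i)*y(2*i+1) + y(2*i)*x(2*i+1))"
    by (rule sum.cong[OF refl]) (simp only: algebra_simps)
  finally show ?thesis .
qed

lemma Bf_sym: "Bf n x y = Bf n y x" unfolding Bf_formula by (rule sum.cong[OF refl]) (simp only: algebra_simps)
lemma Bf_add: "Bf n (x+y) z = Bf n x z + Bf n y z"
  unfolding Bf_formula by (simp only: plus_fun_apply sum.distrib[symmetric] algebra_simps)
lemma Bf_add2: "Bf n z (x+y) = Bf n z x + Bf n z y"
  using Bf_add Bf_sym by metis
lemma Bf_scale: "Bf n (scaleV c x) z = c * Bf n x z"
  unfolding Bf_formula scaleV_def by (simp only: sum_distrib_left algebra_simps)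
lemma Bf_scale2: "Bf n z (scaleV c x) = c * Bf n z x"
  using Bf_scale Bf_sym by metis
lemma Bf_0[simp]: "Bf n 0 z = 0" "Bf n z 0 = 0"
  unfolding Bf_formula by simp_all
lemma Q_add: "Qf n (x+y) = Qf n x + Qf n y + Bf n x y"
  unfolding Bf_def by algebra

lemma sum_fun_apply: "(\<Sum>j\<in>A. (f j :: nat \<Rightarrow> bit)) i = (\<Sum>j\<in>A. f j i)"
  by (induction A rule: infinite_finite_induct) auto

definition ev :: "nat \<Rightarrow> nat \<Rightarrow> bit" where "ev j = (\<lambda>i. if i = j then 1 else 0)"

lemma ev_Vsp: "j < m \<Longrightarrow> ev j \<in> Vsp m" unfolding ev_def Vsp_def by auto

lemma Vsp_span: "Vsp m \<subseteq> spanV (ev ` {..<m})"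
proof
  fix x assume x: "x \<in> Vsp m"
  have "x = (\<Sum>j<m. scaleV (x j) (ev j))"
  proof
    fix i
    have "(\<Sum>j<m. scaleV (x j) (ev j)) i = (\<Sum>j<m. (if j = i then x i else 0))"
      unfolding sum_fun_apply scaleV_def ev_def by (rule sum.cong) auto
    also have "\<dots> = x i" using x by (auto simp: Vsp_def)
    finally show "x i = (\<Sum>j<m. scaleV (x j) (ev j)) i" by simp
  qed
  also have "\<dots> \<in> spanV (ev ` {..<m})"
    by (intro V.span_sum V.span_scale V.span_base) auto
  finally show "x \<in> spanV (ev ` {..<m})" .
qed

lemma nondeg:
  assumes "x \<in> Vsp (2*n)" "x \<noteq> 0"
  shows "\<exists>v\<in>Vsp (2*n). Bf n x v = 1"
proof -
  obtain k where k: "x k \<noteq> 0" using assms(2) by (auto simp: fun_eq_iff)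
  have kn: "k < 2*n" proof (rule ccontr)
    assume "\<not> k < 2*n"
    then show False using assms(1) k unfolding Vsp_def by auto
  qed
  show ?thesis
  proof (cases "even k")
    case True
    then obtain m where m: "k = 2*m" by auto
    have "Bf n x (ev (2*m+1)) = (\<Sum>i<n. if i = m then x (2*m) else 0)"
      unfolding Bf_formula ev_def by (rule sum.cong) auto
    also have "\<dots> = 1" using m k kn by auto
    finally have c: "Bf n x (ev (2*m+1)) = 1" .
    have "ev (2*m+1) \<in> Vsp (2*n)" using kn m by (intro ev_Vsp) auto
    then show ?thesis using c by blast
  next
    case False
    then obtain m where m: "k = 2*m+1" using oddE by blast
    have "Bf n x (ev (2*m)) = (\<Sum>i<n. if i = m then x (2*m+1) else 0)"
      unfolding Bf_formula ev_def by (rule sum.cong) auto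
    also have "\<dots> = 1" using m k kn by auto
    finally have c: "Bf n x (ev (2*m)) = 1" .
    have "ev (2*m) \<in> Vsp (2*n)" using kn m by (intro ev_Vsp) auto
    then show ?thesis using c by blast
  qed
qed

lemma fun_add_self[simp]: "(f::nat\<Rightarrow>bit) + f = 0" by (auto simp: fun_eq_iff)
lemma fun_add_eq0: "(f::nat\<Rightarrow>bit) + g = 0 \<Longrightarrow> f = g"
  by (metis add_eq_0_iff fun_neg)
lemma scaleV_cases: "scaleV c y = (if c = 0 then 0 else y)"
  by (cases c rule: bit_cases2[THEN disjE]) (auto simp: scaleV_def fun_eq_iff)

lemma ts_B: "totally_singular n S \<Longrightarrow> a \<in> S \<Longrightarrow> c \<in> S \<Longrightarrow> Bf n a c = 0"
  unfolding totally_singular_def is_subspace_def Bf_def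
  using V.subspace_add by fastforce

lemma decomp:
  fixes Pi Sigma :: "(nat \<Rightarrow> bit) set"
  assumes n: "n \<ge> 2"
    and tP: "totally_singular n Pi" and dP: "dimV Pi = n"
    and tS: "totally_singular n Sigma" and dS: "dimV Sigma = n"
    and PS: "Pi \<inter> Sigma = {0}"
    and v: "v \<in> Vsp (2*n)"
  shows "\<exists>a\<in>Pi. \<exists>b\<in>Sigma. v = a + b"
proof -
  have sP: "V.subspace Pi" "Pi \<subseteq> Vsp (2*n)" and sS: "V.subspace Sigma" "Sigma \<subseteq> Vsp (2*n)"
    using tP tS unfolding totally_singular_def is_subspace_def by auto
  obtain BP where BP: "BP \<subseteq> Pi" "V.independent BP" "Pi \<subseteq> spanV BP" "card BP = n"
    using V.basis_exists dP by metis
  obtain BS where BS: "BS \<subseteq> Sigma" "V.independent BS" "Sigma \<subseteq> spanV BS" "card BS = n"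
    using V.basis_exists dS by metis
  have fin: "finite BP" "finite BS" using BP(4) BS(4) n by (auto intro: card_ge_0_finite)
  have spP: "spanV BP = Pi" using V.span_subspace BP sP by blast
  have spS: "spanV BS = Sigma" using V.span_subspace BS sS by blast
  have disj: "BP \<inter> BS = {}"
  proof (rule ccontr)
    assume "BP \<inter> BS \<noteq> {}"
    then obtain y where y: "y \<in> BP" "y \<in> BS" by blast
    then have "y \<in> Pi \<inter> Sigma" using BP(1) BS(1) by blast
    then have "y = 0" using PS by blast
    then show False using BP(2) V.dependent_zero y by blast
  qed
  let ?U = "BP \<union> BS"
  have cardU: "card ?U = 2*n" using card_Un_disjoint[OF fin disj] BP BS by simp
  have indU: "V.independent ?U"
  proof
    assume "V.dependent ?U"
    then obtain T u v0 where T: "finite T" "T \<subseteq> ?U" "(\<Sum>v\<in>T. scaleV (u v) v) = 0"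
      and v0: "v0 \<in> T" "u v0 \<noteq> 0"
      unfolding V.dependent_explicit by blast
    define s1 where "s1 = (\<Sum>v\<in>T \<inter> BP. scaleV (u v) v)"
    define s2 where "s2 = (\<Sum>v\<in>T - BP. scaleV (u v) v)"
    have "(\<Sum>v\<in>T. scaleV (u v) v) = s1 + s2" unfolding s1_def s2_def by (rule sum.Int_Diff[OF T(1)])
    then have "s1 + s2 = 0" using T(3) by simp
    then have eq: "s1 = s2" by (rule fun_add_eq0)
    have "s1 \<in> Pi" unfolding s1_def
      using BP(1) by (intro V.subspace_sum[OF sP(1)] V.subspace_scale[OF sP(1)]) auto
    moreover have "s2 \<in> Sigma" unfolding s2_def
      using BS(1) T(2) by (intro V.subspace_sum[OF sS(1)] V.subspace_scale[OF sS(1)]) auto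
    ultimately have "s1 \<in> Pi \<inter> Sigma" using eq by simp
    then have z: "s1 = 0" "s2 = 0" using PS eq by auto
    have "\<forall>v\<in>T \<inter> BP. u v = 0"
    proof (rule ccontr)
      assume "\<not> ?thesis"
      then have "V.dependent BP" unfolding V.dependent_explicit using z(1) T(1) unfolding s1_def
        by (intro exI[of _ "T \<inter> BP"] exI[of _ u]) auto
      then show False using BP(2) by simp
    qed
    moreover have "\<forall>v\<in>T - BP. u v = 0"
    proof (rule ccontr)
      assume "\<not> ?thesis"
      then have "V.dependent BS" unfolding V.dependent_explicit using z(2) T(1,2) unfolding s2_def
        by (intro exI[of _ "T - BP"] exI[of _ u]) auto
      then show False using BS(2) by simp
    qed
    ultimately show False using v0 by blast
  qed
  have "v \<in> spanV ?U"
  proof (rule ccontr)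
    assume nv: "v \<notin> spanV ?U"
    then have ind: "V.independent (insert v ?U)" using V.independent_insertI indU by blast
    have sub: "insert v ?U \<subseteq> Vsp (2*n)"
      using v BP(1) BS(1) sP(2) sS(2) by auto
    have "card (insert v ?U) \<le> card (ev ` {..<2*n})"
      using V.independent_span_bound[OF _ ind order.trans[OF sub Vsp_span]] by simp
    moreover have "card (ev ` {..<2*n}) \<le> 2*n" using card_image_le by fastforce
    moreover have "v \<notin> ?U" using nv V.span_base[of v ?U] by blast
    ultimately show False using fin cardU by simp
  qed
  then show ?thesis unfolding V.span_Un spP spS by blast
qed


lemma pairing:
  fixes Pi Sigma :: "(nat \<Rightarrow> bit) set"
  assumes n: "n \<ge> 2"
    and tP: "totally_singular n Pi" and dP: "dimV Pi = n"
    and tS: "totally_singular n Sigma" and dS: "dimV Sigma = n"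
    and PS: "Pi \<inter> Sigma = {0}"
    and t: "t \<in> Sigma" "t \<noteq> 0"
  shows "\<exists>p\<in>Pi. Bf n p t = 1"
proof -
  have "t \<in> Vsp (2*n)" using t tS unfolding totally_singular_def is_subspace_def by auto
  then obtain v where v: "v \<in> Vsp (2*n)" "Bf n t v = 1" using nondeg t by blast
  obtain p q where pq: "p \<in> Pi" "q \<in> Sigma" "v = p + q"
    using decomp[OF n tP dP tS dS PS v(1)] by blast
  have "Bf n t v = Bf n t p + Bf n t q" using pq by (simp add: Bf_add2)
  also have "Bf n t q = 0" using ts_B[OF tS t(1) pq(2)] .
  finally have "Bf n p t = 1" using v(2) Bf_sym by (metis add_0_right)
  then show ?thesis using pq by blast
qed

theorem mainTheorem1:
  fixes n :: nat and Pi Sigma :: "(nat \<Rightarrow> bit) set" and x :: "nat \<Rightarrow> bit"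
  assumes "n \<ge> 2"
    and "totally_singular n Pi" and "dimV Pi = n"
    and "totally_singular n Sigma" and "dimV Sigma = n"
    and "Pi \<inter> Sigma = {0}"
    and "x \<in> Vsp (2*n)" and "Qf n x \<noteq> 0"
  defines "X \<equiv> spanV {x}"
  defines "G \<equiv> perp n X \<inter> Pi"
  defines "H \<equiv> perp n X \<inter> Sigma"
  defines "P \<equiv> perp n G \<inter> Sigma"
  shows "is_subspace n P \<and> P \<subseteq> Sigma \<and> dimV P = 1
       \<and> is_subspace n H \<and> H \<subseteq> Sigma \<and> dimV H = n - 1
       \<and> \<not> P \<subseteq> H"
proof -
  note n = assms(1) and tP = assms(2) and dP = assms(3) and tS = assms(4) and dS = assms(5)
    and PS = assms(6) and xV = assms(7) and Qx = assms(8)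
  have sP: "V.subspace Pi" "Pi \<subseteq> Vsp (2*n)" and sS: "V.subspace Sigma" "Sigma \<subseteq> Vsp (2*n)"
    using tP tS unfolding totally_singular_def is_subspace_def by auto
  obtain a b where ab: "a \<in> Pi" "b \<in> Sigma" "x = a + b"
    using decomp[OF n tP dP tS dS PS xV] by blast
  have Qa: "Qf n a = 0" and Qb: "Qf n b = 0" using ab tP tS unfolding totally_singular_def by auto
  have Bab: "Bf n a b = 1" using Qx Q_add[of n a b] ab(3) Qa Qb by simp
  have b0: "b \<noteq> 0" using Bab by auto
  have BxS: "Bf n x y = Bf n a y" if "y \<in> Sigma" for y
    using ab ts_B[OF tS ab(2) that] by (simp add: Bf_add)
  have BxP: "Bf n x y = Bf n b y" if "y \<in> Pi" for y
    using ab ts_B[OF tP ab(1) that] by (simp add: Bf_add)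
  have perpX: "perp n X = {y \<in> Vsp (2*n). Bf n x y = 0}"
  proof -
    have "y \<in> perp n X \<longleftrightarrow> y \<in> Vsp (2*n) \<and> Bf n x y = 0" for y
    proof
      assume "y \<in> perp n X"
      moreover have "x \<in> X" unfolding X_def by (rule V.span_base) simp
      ultimately show "y \<in> Vsp (2*n) \<and> Bf n x y = 0" unfolding perp_def by auto
    next
      assume y: "y \<in> Vsp (2*n) \<and> Bf n x y = 0"
      show "y \<in> perp n X" unfolding perp_def X_def V.span_singleton
        using y by (auto simp: Bf_scale)
    qed
    then show ?thesis by blast
  qed
  have Hdef: "H = {y \<in> Sigma. Bf n a y = 0}"
    unfolding H_def perpX using sS BxS by auto
  have Gdef: "G = {y \<in> Pi. Bf n b y = 0}"
    unfolding G_def perpX using sP BxP by auto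
  have Pdef: "P = {s \<in> Sigma. \<forall>g\<in>G. Bf n g s = 0}"
    unfolding P_def perp_def using sS by auto
  have bH: "b \<notin> H" using Bab Hdef by auto
  have Peq: "P = {0, b}"
  proof
    show "{0, b} \<subseteq> P"
      unfolding Pdef Gdef using ab(2) V.subspace_0[OF sS(1)] Bf_sym by auto
  next
    show "P \<subseteq> {0, b}"
    proof
      fix s assume sP': "s \<in> P"
      show "s \<in> {0, b}"
      proof (rule ccontr)
        assume "s \<notin> {0, b}"
        then have s0: "s \<noteq> 0" and sb: "s + b \<noteq> 0" using fun_add_eq0 by auto
        have sS': "s \<in> Sigma" using sP' Pdef by auto
        have sbS: "s + b \<in> Sigma" using V.subspace_add[OF sS(1) sS' ab(2)] .
        obtain p1 where p1: "p1 \<in> Pi" "Bf n p1 s = 1"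
          using pairing[OF n tP dP tS dS PS sS' s0] by blast
        obtain p2 where p2: "p2 \<in> Pi" "Bf n p2 (s + b) = 1"
          using pairing[OF n tP dP tS dS PS sbS sb] by blast
        have p2': "Bf n p2 s + Bf n p2 b = 1" using p2(2) by (simp add: Bf_add2)
        have "\<exists>g\<in>Pi. Bf n b g = 0 \<and> Bf n g s = 1"
        proof (cases "Bf n b p1 = 0")
          case True then show ?thesis using p1 by blast
        next
          case F1: False
          then have b1: "Bf n p1 b = 1" using Bf_sym by auto
          show ?thesis
          proof (cases "Bf n b p2 = 0")
            case True
            then have "Bf n p2 b = 0" using Bf_sym by metis
            then have "Bf n p2 s = 1" using p2' by simp
            then show ?thesis using True p2 by blast
          next
            case False
            then have b2: "Bf n p2 b = 1" using Bf_sym by auto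
            then have s2: "Bf n p2 s = 0" using p2' by auto
            have "p1 + p2 \<in> Pi" using V.subspace_add[OF sP(1) p1(1) p2(1)] .
            moreover have "Bf n b (p1 + p2) = 0" using b1 b2 Bf_sym by (simp add: Bf_add2)
            moreover have "Bf n (p1 + p2) s = 1" using p1(2) s2 by (simp add: Bf_add)
            ultimately show ?thesis by blast
          qed
        qed
        then obtain g where "g \<in> G" "Bf n g s = 1" unfolding Gdef by auto
        then show False using sP' Pdef by auto
      qed
    qed
  qed
  have PSig: "P \<subseteq> Sigma" using Peq ab(2) V.subspace_0[OF sS(1)] by auto
  have subP: "is_subspace n P"
    unfolding is_subspace_def
  proof
    show "P \<subseteq> Vsp (2*n)" using PSig sS by auto
    show "V.subspace P" unfolding Peq V.subspace_def
      by (auto simp: scaleV_cases)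
  qed
  have dimP: "dimV P = 1"
    by (rule V.dim_unique[of "{b}"]) (auto simp: Peq b0 intro: V.span_base V.span_zero)
  have HSig: "H \<subseteq> Sigma" unfolding Hdef by auto
  have subH0: "V.subspace H" unfolding Hdef V.subspace_def
    using V.subspace_0[OF sS(1)] V.subspace_add[OF sS(1)] V.subspace_scale[OF sS(1)]
    by (auto simp: Bf_add2 Bf_scale2)
  have subH: "is_subspace n H" unfolding is_subspace_def using subH0 HSig sS by auto
  obtain C where C: "C \<subseteq> H" "V.independent C" "H \<subseteq> spanV C" "card C = dimV H"
    using V.basis_exists by metis
  have spC: "spanV C = H" using V.span_subspace C subH0 by blast
  have ind: "V.independent (insert b C)" using V.independent_insertI C(2) bH spC by blast
  have "Sigma \<subseteq> spanV (insert b C)"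
  proof
    fix s assume s: "s \<in> Sigma"
    show "s \<in> spanV (insert b C)"
    proof (cases "Bf n a s = 0")
      case True
      then have "s \<in> spanV C" using spC s Hdef by auto
      then show ?thesis using V.span_mono[of C "insert b C"] by auto
    next
      case False
      then have "Bf n a (s + b) = 0" using Bab by (auto simp: Bf_add2)
      then have "s + b \<in> spanV C" using spC s Hdef V.subspace_add[OF sS(1) s ab(2)] by auto
      then have "s + b \<in> spanV (insert b C)" using V.span_mono[of C "insert b C"] by auto
      moreover have "b \<in> spanV (insert b C)" by (rule V.span_base) simp
      ultimately have "(s + b) + b \<in> spanV (insert b C)" by (rule V.span_add)
      moreover have "(s + b) + b = s" by (simp add: add.assoc)
      ultimately show ?thesis by simp
    qed
  qed
  moreover have "insert b C \<subseteq> Sigma" using C(1) HSig ab(2) by auto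
  ultimately have "card (insert b C) = n" using V.basis_card_eq_dim ind dS by metis
  moreover have "finite C"
  proof (rule ccontr)
    assume "infinite C"
    then have "card (insert b C) = 0" by simp
    then show False using \<open>card (insert b C) = n\<close> n by simp
  qed
  moreover have "b \<notin> C" using bH C(1) by auto
  ultimately have dimH: "dimV H = n - 1" using C(4) by simp
  have "\<not> P \<subseteq> H" using bH Peq by auto
  then show ?thesis using subP PSig dimP subH HSig dimH by blast
qed

end
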